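(* Let $a_1,a_2,\ldots\ge 0$, let $C(\theta)=\sum_{n\ge1}a_n\theta^n$ be finite for $\theta\in(0,s)$, fix $\theta\in(0,s)$ with $C(\theta)>0$ and $\alpha_1,\alpha_2,\alpha_3,\lambda>0$. Let $\mathbf Y=(Y_1,Y_2)$ have the $\mathrm{BGEPS}(\alpha_1,\alpha_2,\alpha_3,\lambda,\theta)$ distribution, with joint cdf $$F_{\mathbf Y}(y_1,y_2)=\begin{cases}C\big(\theta F_{GE}(y_1;\alpha_1+\alpha_3,\lambda)F_{GE}(y_2;\alpha_2,\lambda)\big)/C(\theta) & y_1\le y_2,\\ C\big(\theta F_{GE}(y_1;\alpha_1,\lambda)F_{GE}(y_2;\alpha_2+\alpha_3,\lambda)\big)/C(\theta) & y_1>y_2.\end{cases}$$ Then the joint density of $\mathbf Y$ is $f_1(y_1,y_2)$ on $\{0<y_1<y_2\}$, $f_2(y_1,y_2)$ on $\{0<y_2<y_1\}$, and $f_0(y)$ on the diagonal $\{0<y_1=y_2=y\}$, in the sense that for every Borel set $A\subseteq(0,\infty)^2$, $$P(\mathbf Y\in A)=\iint_{A\cap\{y_1<y_2\}}f_1\,dy_1dy_2+\iint_{A\cap\{y_2<y_1\}}f_2\,dy_1dy_2+\int_{\{y:(y,y)\in A\}}f_0(y)\,dy,$$ where, writing $K_1=F_{GE}(y_1;\alpha_1+\alpha_3,\lambda)F_{GE}(y_2;\alpha_2,\lambda)$, $K_2=F_{GE}(y_1;\alpha_1,\lambda)F_{GE}(y_2;\alpha_2+\alpha_3,\lambda)$ and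 $K_0=F_{GE}(y;\alpha_1+\alpha_2+\alpha_3,\lambda)$, $$f_1(y_1,y_2)=\frac{\theta}{C(\theta)}f_{GE}(y_1;\alpha_1+\alpha_3,\lambda)f_{GE}(y_2;\alpha_2,\lambda)\big[\theta K_1C''(\theta K_1)+C'(\theta K_1)\big],$$ $$f_2(y_1,y_2)=\frac{\theta}{C(\theta)}f_{GE}(y_1;\alpha_1,\lambda)f_{GE}(y_2;\alpha_2+\alpha_3,\lambda)\big[\theta K_2C''(\theta K_2)+C'(\theta K_2)\big],$$ $$f_0(y)=\frac{\theta\,\alpha_3}{C(\theta)(\alpha_1+\alpha_2+\alpha_3)}f_{GE}(y;\alpha_1+\alpha_2+\alpha_3,\lambda)\,C'(\theta K_0).$$
   Context: For $\alpha,\lambda>0$ and $x>0$: $F_{GE}(x;\alpha,\lambda)=(1-e^{-\lambda x})^{\alpha}$ and $f_{GE}(x;\alpha,\lambda)=\alpha\lambda e^{-\lambda x}(1-e^{-\lambda x})^{\alpha-1}$ (generalized exponential cdf and pdf). $C'$ and $C''$ denote the first and second derivatives of $C$. *)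

theory Defs
  imports "HOL-Probability.Probability"
begin

definition F_GE :: "real \<Rightarrow> real \<Rightarrow> real \<Rightarrow> real" where
  "F_GE x \<alpha> lam = (if x \<le> 0 then 0 else (1 - exp (- lam * x)) powr \<alpha>)"

definition f_GE :: "real \<Rightarrow> real \<Rightarrow> real \<Rightarrow> real" where
  "f_GE x \<alpha> lam = (if x \<le> 0 then 0 else
     \<alpha> * lam * exp (- lam * x) * (1 - exp (- lam * x)) powr (\<alpha> - 1))"

definition PS_C :: "(nat \<Rightarrow> real) \<Rightarrow> real \<Rightarrow> real" where
  "PS_C a t = (\<Sum>n. a (Suc n) * t ^ Suc n)"

definition BGEPS_cdf ::
  "(nat \<Rightarrow> real) \<Rightarrow> real \<Rightarrow> real \<Rightarrow> real \<Rightarrow> real \<Rightarrow> real \<Rightarrow> real \<Rightarrow> real \<Rightarrow> real" where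
  "BGEPS_cdf a \<alpha>1 \<alpha>2 \<alpha>3 lam \<theta> y1 y2 =
     (if y1 \<le> y2
      then PS_C a (\<theta> * F_GE y1 (\<alpha>1 + \<alpha>3) lam * F_GE y2 \<alpha>2 lam) / PS_C a \<theta>
      else PS_C a (\<theta> * F_GE y1 \<alpha>1 lam * F_GE y2 (\<alpha>2 + \<alpha>3) lam) / PS_C a \<theta>)"

definition BGEPS_f1 ::
  "(nat \<Rightarrow> real) \<Rightarrow> real \<Rightarrow> real \<Rightarrow> real \<Rightarrow> real \<Rightarrow> real \<Rightarrow> real \<Rightarrow> real \<Rightarrow> real" where
  "BGEPS_f1 a \<alpha>1 \<alpha>2 \<alpha>3 lam \<theta> y1 y2 =
     (let C = PS_C a; K = F_GE y1 (\<alpha>1 + \<alpha>3) lam * F_GE y2 \<alpha>2 lam in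
      \<theta> / C \<theta> * f_GE y1 (\<alpha>1 + \<alpha>3) lam * f_GE y2 \<alpha>2 lam *
      (\<theta> * K * deriv (deriv C) (\<theta> * K) + deriv C (\<theta> * K)))"

definition BGEPS_f2 ::
  "(nat \<Rightarrow> real) \<Rightarrow> real \<Rightarrow> real \<Rightarrow> real \<Rightarrow> real \<Rightarrow> real \<Rightarrow> real \<Rightarrow> real \<Rightarrow> real" where
  "BGEPS_f2 a \<alpha>1 \<alpha>2 \<alpha>3 lam \<theta> y1 y2 =
     (let C = PS_C a; K = F_GE y1 \<alpha>1 lam * F_GE y2 (\<alpha>2 + \<alpha>3) lam in
      \<theta> / C \<theta> * f_GE y1 \<alpha>1 lam * f_GE y2 (\<alpha>2 + \<alpha>3) lam *
      (\<theta> * K * deriv (deriv C) (\<theta> * K) + deriv C (\<theta> * K)))"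

definition BGEPS_f0 ::
  "(nat \<Rightarrow> real) \<Rightarrow> real \<Rightarrow> real \<Rightarrow> real \<Rightarrow> real \<Rightarrow> real \<Rightarrow> real \<Rightarrow> real" where
  "BGEPS_f0 a \<alpha>1 \<alpha>2 \<alpha>3 lam \<theta> y =
     (let C = PS_C a; K = F_GE y (\<alpha>1 + \<alpha>2 + \<alpha>3) lam in
      \<theta> * \<alpha>3 / (C \<theta> * (\<alpha>1 + \<alpha>2 + \<alpha>3)) * f_GE y (\<alpha>1 + \<alpha>2 + \<alpha>3) lam * deriv C (\<theta> * K))"

end

theory Submission
  imports Defs
begin

lemma FTC_open:
  fixes f F :: "real \<Rightarrow> real" and a b A B :: real
  assumes "a < b"
    and F: "\<And>x. a < x \<Longrightarrow> x < b \<Longrightarrow> DERIV F x :> f x"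
    and f: "\<And>x. a < x \<Longrightarrow> x < b \<Longrightarrow> isCont f x"
    and nn: "\<And>x. a < x \<Longrightarrow> x < b \<Longrightarrow> 0 \<le> f x"
    and lA: "(F \<longlongrightarrow> A) (at_right a)"
    and lB: "(F \<longlongrightarrow> B) (at_left b)"
  shows "(\<integral>\<^sup>+x. ennreal (f x) * indicator {a<..<b} x \<partial>lborel) = ennreal (B - A)"
    and "A \<le> B"
proof -
  have lA': "((F \<circ> real_of_ereal) \<longlongrightarrow> A) (at_right (ereal a))"
    using lA by (simp add: ereal_tendsto_simps)
  have lB': "((F \<circ> real_of_ereal) \<longlongrightarrow> B) (at_left (ereal b))"
    using lB by (simp add: ereal_tendsto_simps)
  note R = interval_integral_FTC_nonneg[of "ereal a" "ereal b" F f, OF _ _ _ _ lA' lB']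
  have si: "set_integrable lborel (einterval (ereal a) (ereal b)) f"
    and val: "(LBINT x=ereal a..ereal b. f x) = B - A"
    using R assms by auto
  have ei: "einterval (ereal a) (ereal b) = {a<..<b}" by (auto simp: einterval_def)
  have int: "integrable lborel (\<lambda>x. indicator {a<..<b} x * f x)"
    using si ei by (simp add: set_integrable_def)
  have "(LBINT x=ereal a..ereal b. f x) = integral\<^sup>L lborel (\<lambda>x. indicator {a<..<b} x * f x)"
    using \<open>a < b\<close> ei by (simp add: interval_lebesgue_integral_def set_lebesgue_integral_def)
  hence val2: "integral\<^sup>L lborel (\<lambda>x. indicator {a<..<b} x * f x) = B - A" using val by simp
  have nn2: "\<And>x. 0 \<le> indicator {a<..<b} x * f x" using nn by (auto split: split_indicator)
  have "(\<integral>\<^sup>+x. ennreal (f x) * indicator {a<..<b} x \<partial>lborel)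
      = (\<integral>\<^sup>+x. ennreal (indicator {a<..<b} x * f x) \<partial>lborel)"
    by (intro nn_integral_cong) (auto split: split_indicator)
  also have "\<dots> = ennreal (B - A)"
    using nn_integral_eq_integral[OF int] nn2 val2 by simp
  finally show "(\<integral>\<^sup>+x. ennreal (f x) * indicator {a<..<b} x \<partial>lborel) = ennreal (B - A)" .
  have "0 \<le> integral\<^sup>L lborel (\<lambda>x. indicator {a<..<b} x * f x)"
    using nn2 by (simp add: integral_nonneg_AE)
  then show "A \<le> B" using val2 by simp
qed

definition Fp :: "real \<Rightarrow> real \<Rightarrow> real \<Rightarrow> real" where
  "Fp lam \<beta> y = (1 - exp (- lam * y)) powr \<beta>"
definition fp :: "real \<Rightarrow> real \<Rightarrow> real \<Rightarrow> real" where
  "fp lam \<beta> y = \<beta> * lam * exp (- lam * y) * (1 - exp (- lam * y)) powr (\<beta> - 1)"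

lemma F_GE_pos: "y > 0 \<Longrightarrow> F_GE y \<beta> lam = Fp lam \<beta> y"
  by (simp add: F_GE_def Fp_def)
lemma f_GE_pos: "y > 0 \<Longrightarrow> f_GE y \<beta> lam = fp lam \<beta> y"
  by (simp add: f_GE_def fp_def)
lemma F_GE_npos: "y \<le> 0 \<Longrightarrow> F_GE y \<beta> lam = 0"
  by (simp add: F_GE_def)
lemma f_GE_npos: "y \<le> 0 \<Longrightarrow> f_GE y \<beta> lam = 0"
  by (simp add: f_GE_def)

lemma u_bounds: fixes lam y :: real assumes "lam > 0" "y > 0" shows "0 < 1 - exp (- lam * y)" "1 - exp (- lam * y) < 1"
proof -
  have "lam * y > 0" using assms by (simp add: mult_pos_pos)
  thus "0 < 1 - exp (- lam * y)" "1 - exp (- lam * y) < 1" by auto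
qed

lemma Fp_bounds: assumes "lam > 0" "y > 0" "\<beta> > 0"
  shows "0 < Fp lam \<beta> y" "Fp lam \<beta> y < 1"
proof -
  note u = u_bounds[OF assms(1,2)]
  show "0 < Fp lam \<beta> y" using u assms by (simp add: Fp_def)
  have "(1 - exp (- lam * y)) powr \<beta> < 1 powr \<beta>"
    by (rule powr_less_mono2) (use u assms in auto)
  thus "Fp lam \<beta> y < 1" by (simp add: Fp_def)
qed

lemma fp_nn: assumes "lam > 0" "y > 0" "\<beta> > 0" shows "0 \<le> fp lam \<beta> y"
  using assms u_bounds[OF assms(1,2)] by (simp add: fp_def)

lemma Fp_deriv: assumes "lam > 0" "y > 0"
  shows "DERIV (Fp lam \<beta>) y :> fp lam \<beta> y"
proof -
  have d: "DERIV (\<lambda>y. 1 - exp (- lam * y)) y :> lam * exp (- lam * y)"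
    by (auto intro!: derivative_eq_intros)
  show ?thesis
    using DERIV_fun_powr[OF d u_bounds(1)[OF assms], of \<beta>]
    unfolding Fp_def[abs_def] fp_def by (simp add: algebra_simps)
qed

lemma Fp_cont: assumes "lam > 0" "y > 0" shows "isCont (Fp lam \<beta>) y"
  using Fp_deriv[OF assms] DERIV_isCont by blast

lemma fp_cont: assumes "lam > 0" "y > 0" shows "isCont (fp lam \<beta>) y"
  unfolding fp_def[abs_def] using u_bounds[OF assms]
  by (auto intro!: continuous_intros)

lemma Fp_add: assumes "lam > 0" "y > 0"
  shows "Fp lam \<beta> y * Fp lam \<gamma> y = Fp lam (\<beta> + \<gamma>) y"
  using u_bounds[OF assms] by (simp add: Fp_def powr_add)

lemma fp_Fp: assumes "lam > 0" "y > 0" "\<beta> + \<gamma> > 0"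
  shows "fp lam \<beta> y * Fp lam \<gamma> y = \<beta> / (\<beta> + \<gamma>) * fp lam (\<beta> + \<gamma>) y"
proof -
  have "(1 - exp (- lam * y)) powr (\<beta> - 1) * (1 - exp (- lam * y)) powr \<gamma>
        = (1 - exp (- lam * y)) powr (\<beta> + \<gamma> - 1)"
    using u_bounds[OF assms(1,2)] by (simp add: powr_add[symmetric] algebra_simps)
  thus ?thesis using assms(3) unfolding fp_def Fp_def by (simp add: field_simps)
qed

lemma Fp_lim0: assumes "lam > 0" "\<beta> > 0" shows "(Fp lam \<beta> \<longlongrightarrow> 0) (at_right 0)"
  unfolding Fp_def[abs_def]
proof (rule tendsto_zero_powrI)
  have "((\<lambda>y. 1 - exp (- lam * y)) \<longlongrightarrow> 1 - exp (- lam * 0)) (at_right 0)"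
    by (intro tendsto_intros)
  thus "((\<lambda>y. 1 - exp (- lam * y)) \<longlongrightarrow> 0) (at_right 0)" by simp
  show "((\<lambda>y. \<beta>) \<longlongrightarrow> \<beta>) (at_right 0)" by simp
  show "\<forall>\<^sub>F x in at_right 0. 0 \<le> 1 - exp (- lam * x)"
    using eventually_at_right_less[of "0::real"] 
    by eventually_elim (use assms in \<open>auto simp: less_imp_le[OF u_bounds(1)]\<close>)
  show "0 < \<beta>" by fact
qed

locale psc =
  fixes a :: "nat \<Rightarrow> real" and \<theta> :: real
  assumes a_nonneg: "\<And>n. n \<ge> 1 \<Longrightarrow> a n \<ge> 0" and th: "\<theta> > 0"
    and summ: "summable (\<lambda>n. a (Suc n) * \<theta> ^ Suc n)"
begin

definition c where "c n = (if n = 0 then 0 else a n)"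
definition Cs where "Cs z = (\<Sum>n. c n * z^n)"
definition C1 where "C1 z = (\<Sum>n. diffs c n * z^n)"
definition C2 where "C2 z = (\<Sum>n. diffs (diffs c) n * z^n)"
definition C3 where "C3 z = (\<Sum>n. diffs (diffs (diffs c)) n * z^n)"

lemma PS_eq: "PS_C a = Cs"
proof
  fix t
  have eq: "(\<lambda>n. a (Suc n) * t ^ Suc n) sums s \<longleftrightarrow> (\<lambda>n. c n * t^n) sums s" for s
    using sums_Suc_iff[of "\<lambda>n. c n * t^n"] by (simp add: c_def)
  have "(sums) (\<lambda>n. a (Suc n) * t ^ Suc n) = (sums) (\<lambda>n. c n * t^n)"
    by (intro ext) (rule eq)
  then show "PS_C a t = Cs t" unfolding PS_C_def Cs_def suminf_def by simp
qed

lemma summ_c: "norm z < \<theta> \<Longrightarrow> summable (\<lambda>n. c n * z^n)"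
proof -
  assume z: "norm z < \<theta>"
  have "summable (\<lambda>n. c (Suc n) * \<theta> ^ Suc n)" using summ by (simp add: c_def)
  hence "summable (\<lambda>n. c n * \<theta>^n)" by (subst (asm) summable_Suc_iff)
  thus ?thesis using powser_inside z th by force
qed

lemma summ_c1: "norm z < \<theta> \<Longrightarrow> summable (\<lambda>n. diffs c n * z^n)"
  by (rule termdiff_converges[of z \<theta>]) (auto intro: summ_c)
lemma summ_c2: "norm z < \<theta> \<Longrightarrow> summable (\<lambda>n. diffs (diffs c) n * z^n)"
  by (rule termdiff_converges[of z \<theta>]) (auto intro: summ_c1)
lemma summ_c3: "norm z < \<theta> \<Longrightarrow> summable (\<lambda>n. diffs (diffs (diffs c)) n * z^n)"
  by (rule termdiff_converges[of z \<theta>]) (auto intro: summ_c2)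

lemma D0: "norm z < \<theta> \<Longrightarrow> DERIV Cs z :> C1 z"
  unfolding Cs_def[abs_def] C1_def by (rule termdiffs_strong'[of \<theta>]) (auto intro: summ_c)
lemma D1: "norm z < \<theta> \<Longrightarrow> DERIV C1 z :> C2 z"
  unfolding C1_def[abs_def] C2_def by (rule termdiffs_strong'[of \<theta>]) (auto intro: summ_c1)
lemma D2: "norm z < \<theta> \<Longrightarrow> DERIV C2 z :> C3 z"
  unfolding C2_def[abs_def] C3_def by (rule termdiffs_strong'[of \<theta>]) (auto intro: summ_c2)

lemma cont0: "norm z < \<theta> \<Longrightarrow> isCont Cs z" using D0 DERIV_isCont by blast
lemma cont1: "norm z < \<theta> \<Longrightarrow> isCont C1 z" using D1 DERIV_isCont by blast
lemma cont2: "norm z < \<theta> \<Longrightarrow> isCont C2 z" using D2 DERIV_isCont by blast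

lemma deriv_PS: "norm z < \<theta> \<Longrightarrow> deriv (PS_C a) z = C1 z"
  unfolding PS_eq using D0 DERIV_imp_deriv by blast

lemma deriv2_PS: "norm z < \<theta> \<Longrightarrow> deriv (deriv (PS_C a)) z = C2 z"
proof -
  assume z: "norm z < \<theta>"
  have "DERIV (deriv (PS_C a)) z :> C2 z"
  proof (rule has_field_derivative_transform_within_open[OF D1[OF z], of "ball 0 \<theta>"])
    show "open (ball 0 \<theta>)" by simp
    show "z \<in> ball 0 \<theta>" using z by simp
    show "\<And>x. x \<in> ball 0 \<theta> \<Longrightarrow> C1 x = deriv (PS_C a) x" using deriv_PS by simp
  qed
  thus ?thesis using DERIV_imp_deriv by blast
qed

lemma c_nn: "0 \<le> c n" using a_nonneg by (simp add: c_def)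
lemma c1_nn: "0 \<le> diffs c n" using c_nn by (simp add: diffs_def)
lemma c2_nn: "0 \<le> diffs (diffs c) n"
  unfolding diffs_def[of "diffs c"] using c1_nn[of "Suc n"] by simp

lemma Cs_nn: "0 \<le> z \<Longrightarrow> z < \<theta> \<Longrightarrow> 0 \<le> Cs z"
  unfolding Cs_def by (rule suminf_nonneg) (auto intro!: summ_c c_nn mult_nonneg_nonneg)
lemma C1_nn: "0 \<le> z \<Longrightarrow> z < \<theta> \<Longrightarrow> 0 \<le> C1 z"
  unfolding C1_def by (rule suminf_nonneg) (auto intro!: summ_c1 c1_nn mult_nonneg_nonneg)
lemma C2_nn: "0 \<le> z \<Longrightarrow> z < \<theta> \<Longrightarrow> 0 \<le> C2 z"
  unfolding C2_def by (rule suminf_nonneg) (auto intro!: summ_c2 c2_nn mult_nonneg_nonneg)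
lemma Cs_0: "Cs 0 = 0" unfolding Cs_def by (simp add: c_def)
lemma Cs_mono: "0 \<le> x \<Longrightarrow> x \<le> y \<Longrightarrow> y < \<theta> \<Longrightarrow> Cs x \<le> Cs y"
  unfolding Cs_def
  by (rule suminf_le) (auto intro!: summ_c mult_left_mono power_mono c_nn)

end

locale bge = psc +
  fixes lam :: real
  assumes lam: "lam > 0"
begin

lemma contC1: "isCont g x \<Longrightarrow> norm (g x) < \<theta> \<Longrightarrow> isCont (\<lambda>x. C1 (g x)) x"
  using isCont_o2 cont1 by blast
lemma contC2: "isCont g x \<Longrightarrow> norm (g x) < \<theta> \<Longrightarrow> isCont (\<lambda>x. C2 (g x)) x"
  using isCont_o2 cont2 by blast
lemma contCs: "isCont g x \<Longrightarrow> norm (g x) < \<theta> \<Longrightarrow> isCont (\<lambda>x. Cs (g x)) x"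
  using isCont_o2 cont0 by blast

lemma Fpc: "y > 0 \<Longrightarrow> isCont (\<lambda>y. Fp lam \<beta> y) y" using Fp_cont[OF lam] by simp
lemma fpc: "y > 0 \<Longrightarrow> isCont (\<lambda>y. fp lam \<beta> y) y" using fp_cont[OF lam] by simp

lemma arg2: assumes "s > 0" "t > 0" "\<beta> > 0" "\<gamma> > 0"
  shows "0 \<le> \<theta> * Fp lam \<beta> s * Fp lam \<gamma> t" "\<theta> * Fp lam \<beta> s * Fp lam \<gamma> t < \<theta>"
    "norm (\<theta> * Fp lam \<beta> s * Fp lam \<gamma> t) < \<theta>"
proof -
  note b1 = Fp_bounds[OF lam assms(1,3)] and b2 = Fp_bounds[OF lam assms(2,4)]
  show 1: "0 \<le> \<theta> * Fp lam \<beta> s * Fp lam \<gamma> t" using b1 b2 th by simp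
  have "Fp lam \<beta> s * Fp lam \<gamma> t < 1 * 1"
    using b1 b2 by (intro mult_strict_mono) auto
  hence "\<theta> * (Fp lam \<beta> s * Fp lam \<gamma> t) < \<theta> * 1" using th by (intro mult_strict_left_mono) auto
  thus 2: "\<theta> * Fp lam \<beta> s * Fp lam \<gamma> t < \<theta>" by (simp add: mult.assoc)
  show "norm (\<theta> * Fp lam \<beta> s * Fp lam \<gamma> t) < \<theta>" using 1 2 by simp
qed

lemma arg1: assumes "s > 0" "\<beta> > 0"
  shows "0 \<le> \<theta> * Fp lam \<beta> s" "\<theta> * Fp lam \<beta> s < \<theta>" "norm (\<theta> * Fp lam \<beta> s) < \<theta>"
proof -
  note b1 = Fp_bounds[OF lam assms(1,2)]
  show 1: "0 \<le> \<theta> * Fp lam \<beta> s" using b1 th by simp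
  show 2: "\<theta> * Fp lam \<beta> s < \<theta>" using b1 th by simp
  show "norm (\<theta> * Fp lam \<beta> s) < \<theta>" using 1 2 by simp
qed

definition hh where
  "hh \<beta> \<gamma> s t = \<theta> * fp lam \<beta> s * fp lam \<gamma> t *
     (\<theta> * Fp lam \<beta> s * Fp lam \<gamma> t * C2 (\<theta> * Fp lam \<beta> s * Fp lam \<gamma> t)
      + C1 (\<theta> * Fp lam \<beta> s * Fp lam \<gamma> t))"

definition Phi where
  "Phi \<beta> \<gamma> s t = \<theta> * fp lam \<beta> s * Fp lam \<gamma> t * C1 (\<theta> * Fp lam \<beta> s * Fp lam \<gamma> t)"

lemma hh_nn: assumes "s > 0" "t > 0" "\<beta> > 0" "\<gamma> > 0" shows "0 \<le> hh \<beta> \<gamma> s t"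
proof -
  note A = arg2[OF assms]
  show ?thesis unfolding hh_def
    using A C1_nn[OF A(1,2)] C2_nn[OF A(1,2)] fp_nn[OF lam assms(1,3)] fp_nn[OF lam assms(2,4)] th
      Fp_bounds[OF lam assms(1,3)] Fp_bounds[OF lam assms(2,4)]
    by (intro mult_nonneg_nonneg add_nonneg_nonneg) auto
qed

lemma hh_cont: assumes "s > 0" "t > 0" "\<beta> > 0" "\<gamma> > 0"
  shows "isCont (\<lambda>p. hh \<beta> \<gamma> (fst p) (snd p)) (s, t)"
proof -
  let ?K = "\<lambda>p. \<theta> * Fp lam \<beta> (fst p) * Fp lam \<gamma> (snd p)"
  have cF1: "isCont (\<lambda>p. Fp lam \<beta> (fst p)) (s, t)"
    by (rule isCont_o2[OF isCont_fst]) (use Fpc assms in auto)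
  have cF2: "isCont (\<lambda>p. Fp lam \<gamma> (snd p)) (s, t)"
    by (rule isCont_o2[OF isCont_snd]) (use Fpc assms in auto)
  have cf1: "isCont (\<lambda>p. fp lam \<beta> (fst p)) (s, t)"
    by (rule isCont_o2[OF isCont_fst]) (use fpc assms in auto)
  have cf2: "isCont (\<lambda>p. fp lam \<gamma> (snd p)) (s, t)"
    by (rule isCont_o2[OF isCont_snd]) (use fpc assms in auto)
  have cK: "isCont ?K (s, t)" using cF1 cF2 by (intro continuous_intros)
  have n: "norm (?K (s, t)) < \<theta>" using arg2[OF assms] by simp
  have c1: "isCont (\<lambda>p. C1 (?K p)) (s, t)" by (rule contC1[OF cK n])
  have c2: "isCont (\<lambda>p. C2 (?K p)) (s, t)" by (rule contC2[OF cK n])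
  show ?thesis unfolding hh_def using cF1 cF2 cf1 cf2 c1 c2
    by (intro continuous_intros) auto
qed

lemma inner_int: assumes "\<beta> > 0" "\<gamma> > 0" "0 < s" "s < x2"
  shows "(\<integral>\<^sup>+t. ennreal (hh \<beta> \<gamma> s t) * indicator {s<..<x2} t \<partial>lborel)
           = ennreal (Phi \<beta> \<gamma> s x2 - Phi \<beta> \<gamma> s s)"
    and "Phi \<beta> \<gamma> s s \<le> Phi \<beta> \<gamma> s x2"
proof -
  have der: "DERIV (Phi \<beta> \<gamma> s) t :> hh \<beta> \<gamma> s t" if t: "t > 0" for t
  proof -
    let ?K = "\<theta> * Fp lam \<beta> s * Fp lam \<gamma> t"
    have d1: "DERIV (\<lambda>x. \<theta> * Fp lam \<beta> s * Fp lam \<gamma> x) t :> \<theta> * Fp lam \<beta> s * fp lam \<gamma> t"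
      using DERIV_cmult[OF Fp_deriv[OF lam t], of "\<theta> * Fp lam \<beta> s" \<gamma>] by simp
    have n: "norm ?K < \<theta>" using arg2[OF assms(3) t assms(1,2)] by simp
    note d2 = DERIV_chain2[OF D1[OF n] d1]
    have d3: "DERIV (\<lambda>x. \<theta> * fp lam \<beta> s * Fp lam \<gamma> x) t :> \<theta> * fp lam \<beta> s * fp lam \<gamma> t"
      using DERIV_cmult[OF Fp_deriv[OF lam t], of "\<theta> * fp lam \<beta> s" \<gamma>] by simp
    have "DERIV (\<lambda>x. \<theta> * fp lam \<beta> s * Fp lam \<gamma> x * C1 (\<theta> * Fp lam \<beta> s * Fp lam \<gamma> x)) t :>
           \<theta> * fp lam \<beta> s * fp lam \<gamma> t * C1 ?K + C2 ?K * (\<theta> * Fp lam \<beta> s * fp lam \<gamma> t) * (\<theta> * fp lam \<beta> s * Fp lam \<gamma> t)"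
      by (rule DERIV_mult[OF d3 d2])
    then show ?thesis unfolding Phi_def[abs_def] hh_def
      by (rule DERIV_cong) (simp add: algebra_simps)
  qed
  have contPhi: "isCont (Phi \<beta> \<gamma> s) t" if "t > 0" for t
    using der[OF that] DERIV_isCont by blast
  have x2: "x2 > 0" using assms by simp
  have h1: "DERIV (Phi \<beta> \<gamma> s) x :> hh \<beta> \<gamma> s x" if "s < x" "x < x2" for x
    using der that assms by simp
  have h2: "isCont (hh \<beta> \<gamma> s) x" if "s < x" "x < x2" for x
  proof -
    have h: "isCont (\<lambda>p. hh \<beta> \<gamma> (fst p) (snd p)) (s, x)"
      by (rule hh_cont) (use that assms in auto)
    have p: "isCont (\<lambda>x. (s, x)) x" by (intro continuous_intros)
    from isCont_o2[OF p h] show "isCont (hh \<beta> \<gamma> s) x" by simp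
  qed
  have h3: "0 \<le> hh \<beta> \<gamma> s x" if "s < x" "x < x2" for x
    using hh_nn[of s x \<beta> \<gamma>] that assms by simp
  have h4: "(Phi \<beta> \<gamma> s \<longlongrightarrow> Phi \<beta> \<gamma> s s) (at_right s)"
    using contPhi[OF assms(3)] unfolding isCont_def by (rule tendsto_within_subset) simp
  have h5: "(Phi \<beta> \<gamma> s \<longlongrightarrow> Phi \<beta> \<gamma> s x2) (at_left x2)"
    using contPhi[OF x2] unfolding isCont_def by (rule tendsto_within_subset) simp
  note R = FTC_open[OF assms(4) h1 h2 h3 h4 h5]
  show "(\<integral>\<^sup>+t. ennreal (hh \<beta> \<gamma> s t) * indicator {s<..<x2} t \<partial>lborel)
           = ennreal (Phi \<beta> \<gamma> s x2 - Phi \<beta> \<gamma> s s)" by (rule R(1))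
  show "Phi \<beta> \<gamma> s s \<le> Phi \<beta> \<gamma> s x2" by (rule R(2))
qed

definition RR :: "real \<Rightarrow> real \<Rightarrow> (real \<times> real) set" where
  "RR x1 x2 = {p. 0 < fst p \<and> fst p < snd p \<and> fst p \<le> x1 \<and> snd p \<le> x2}"

lemma Phi_diag: assumes "s > 0" "\<beta> > 0" "\<gamma> > 0"
  shows "Phi \<beta> \<gamma> s s = \<beta> / (\<beta> + \<gamma>) * (\<theta> * fp lam (\<beta> + \<gamma>) s * C1 (\<theta> * Fp lam (\<beta> + \<gamma>) s))"
proof -
  have e1: "\<theta> * Fp lam \<beta> s * Fp lam \<gamma> s = \<theta> * Fp lam (\<beta>+\<gamma>) s"
    using Fp_add[OF lam assms(1)] by (simp add: mult.assoc)
  have e2: "fp lam \<beta> s * Fp lam \<gamma> s = \<beta>/(\<beta>+\<gamma>)*fp lam (\<beta>+\<gamma>) s"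
    using fp_Fp[OF lam assms(1)] assms by simp
  have "Phi \<beta> \<gamma> s s = \<theta> * (fp lam \<beta> s * Fp lam \<gamma> s) * C1 (\<theta> * Fp lam (\<beta>+\<gamma>) s)"
    unfolding Phi_def e1 by (simp add: mult.assoc)
  also have "\<dots> = \<beta> / (\<beta> + \<gamma>) * (\<theta> * fp lam (\<beta> + \<gamma>) s * C1 (\<theta> * Fp lam (\<beta> + \<gamma>) s))"
    unfolding e2 by (simp add: ac_simps)
  finally show ?thesis .
qed

lemma lemA0: assumes bg: "\<beta> > 0" "\<gamma> > 0"
  shows "(\<integral>\<^sup>+s. \<integral>\<^sup>+t. ennreal (hh \<beta> \<gamma> s t) * indicator (RR x1 x2) (s, t) \<partial>lborel \<partial>lborel)
    = ennreal (Cs (\<theta> * F_GE (min x1 x2) \<beta> lam * F_GE x2 \<gamma> lam)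
               - \<beta> / (\<beta> + \<gamma>) * Cs (\<theta> * F_GE (min x1 x2) (\<beta> + \<gamma>) lam))
    \<and> 0 \<le> Cs (\<theta> * F_GE (min x1 x2) \<beta> lam * F_GE x2 \<gamma> lam)
               - \<beta> / (\<beta> + \<gamma>) * Cs (\<theta> * F_GE (min x1 x2) (\<beta> + \<gamma>) lam)"
proof (cases "min x1 x2 \<le> 0")
  case True
  have "indicator (RR x1 x2) (s, t) = (0::ennreal)" for s t
    using True by (auto simp: RR_def split: split_indicator)
  then have a1: "(\<integral>\<^sup>+s. \<integral>\<^sup>+t. ennreal (hh \<beta> \<gamma> s t) * indicator (RR x1 x2) (s, t) \<partial>lborel \<partial>lborel)
    = ennreal (Cs (\<theta> * F_GE (min x1 x2) \<beta> lam * F_GE x2 \<gamma> lam)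
               - \<beta> / (\<beta> + \<gamma>) * Cs (\<theta> * F_GE (min x1 x2) (\<beta> + \<gamma>) lam))"
    using True by (simp add: F_GE_npos Cs_0)
  have a2: "0 \<le> Cs (\<theta> * F_GE (min x1 x2) \<beta> lam * F_GE x2 \<gamma> lam)
               - \<beta> / (\<beta> + \<gamma>) * Cs (\<theta> * F_GE (min x1 x2) (\<beta> + \<gamma>) lam)"
    using True by (simp add: F_GE_npos Cs_0)
  show ?thesis using a1 a2 by blast
next
  case False
  define m where "m = min x1 x2"
  have m: "m > 0" "m \<le> x1" "m \<le> x2" using False by (auto simp: m_def)
  have bg2: "\<beta> + \<gamma> > 0" using bg by simp
  define ob where "ob s = \<theta> * fp lam \<beta> s * Fp lam \<gamma> x2 * C1 (\<theta> * Fp lam \<beta> s * Fp lam \<gamma> x2)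
      - \<beta> / (\<beta> + \<gamma>) * (\<theta> * fp lam (\<beta> + \<gamma>) s * C1 (\<theta> * Fp lam (\<beta> + \<gamma>) s))" for s
  define Psi where "Psi s = Cs (\<theta> * Fp lam \<beta> s * Fp lam \<gamma> x2)
      - \<beta> / (\<beta> + \<gamma>) * Cs (\<theta> * Fp lam (\<beta> + \<gamma>) s)" for s
  have ob_eq: "ob s = Phi \<beta> \<gamma> s x2 - Phi \<beta> \<gamma> s s" if "s > 0" for s
    unfolding ob_def Phi_diag[OF that bg] by (simp add: Phi_def)
  have inner: "(\<integral>\<^sup>+t. ennreal (hh \<beta> \<gamma> s t) * indicator (RR x1 x2) (s, t) \<partial>lborel)
        = ennreal (ob s) * indicator {0<..<m} s" if "s \<noteq> m" for s
  proof (cases "0 < s \<and> s < m")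
    case True
    have "(\<integral>\<^sup>+t. ennreal (hh \<beta> \<gamma> s t) * indicator (RR x1 x2) (s, t) \<partial>lborel)
        = (\<integral>\<^sup>+t. ennreal (hh \<beta> \<gamma> s t) * indicator {s<..<x2} t \<partial>lborel)"
    proof (rule nn_integral_cong_AE)
      show "AE t in lborel. ennreal (hh \<beta> \<gamma> s t) * indicator (RR x1 x2) (s, t)
              = ennreal (hh \<beta> \<gamma> s t) * indicator {s<..<x2} t"
        using AE_lborel_singleton[of x2]
        by eventually_elim (use True m in \<open>auto simp: RR_def split: split_indicator\<close>)
    qed
    also have "\<dots> = ennreal (ob s)"
      using inner_int(1)[OF bg, of s x2] True m ob_eq[of s] by simp
    finally show ?thesis using True by simp
  next
    case False
    have "indicator (RR x1 x2) (s, t) = (0::ennreal)" for t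
      using False that m by (auto simp: RR_def m_def split: split_indicator)
    then show ?thesis using False by (simp split: split_indicator)
  qed
  have h1: "DERIV Psi s :> ob s" if "0 < s" "s < m" for s
  proof -
    have x2: "x2 > 0" using m by simp
    have s: "s > 0" using that by simp
    have d1: "DERIV (\<lambda>s. \<theta> * Fp lam \<beta> s * Fp lam \<gamma> x2) s :> \<theta> * fp lam \<beta> s * Fp lam \<gamma> x2"
      using DERIV_cmult[OF Fp_deriv[OF lam s], of \<theta> \<beta>] DERIV_cmult_right by fastforce
    have n1: "norm (\<theta> * Fp lam \<beta> s * Fp lam \<gamma> x2) < \<theta>" using arg2[OF s x2 bg] by simp
    note e1 = DERIV_chain2[OF D0[OF n1] d1]
    have d2: "DERIV (\<lambda>s. \<theta> * Fp lam (\<beta>+\<gamma>) s) s :> \<theta> * fp lam (\<beta>+\<gamma>) s"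
      using DERIV_cmult[OF Fp_deriv[OF lam s], of \<theta> "\<beta>+\<gamma>"] by simp
    have n2: "norm (\<theta> * Fp lam (\<beta>+\<gamma>) s) < \<theta>" using arg1[OF s bg2] by simp
    note e2 = DERIV_cmult[OF DERIV_chain2[OF D0[OF n2] d2], of "\<beta> / (\<beta> + \<gamma>)"]
    have "DERIV Psi s :> C1 (\<theta> * Fp lam \<beta> s * Fp lam \<gamma> x2) * (\<theta> * fp lam \<beta> s * Fp lam \<gamma> x2)
         - \<beta> / (\<beta> + \<gamma>) * (C1 (\<theta> * Fp lam (\<beta>+\<gamma>) s) * (\<theta> * fp lam (\<beta>+\<gamma>) s))"
      unfolding Psi_def[abs_def] by (rule DERIV_diff[OF e1 e2])
    then show ?thesis unfolding ob_def by (rule DERIV_cong) (simp add: algebra_simps)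
  qed
  have h2: "isCont ob s" if "0 < s" "s < m" for s
  proof -
    have x2: "x2 > 0" using m by simp
    have s: "s > 0" using that by simp
    have n1: "norm (\<theta> * Fp lam \<beta> s * Fp lam \<gamma> x2) < \<theta>" using arg2[OF s x2 bg] by simp
    have n2: "norm (\<theta> * Fp lam (\<beta>+\<gamma>) s) < \<theta>" using arg1[OF s bg2] by simp
    have c1: "isCont (\<lambda>s. C1 (\<theta> * Fp lam \<beta> s * Fp lam \<gamma> x2)) s"
      by (rule contC1[where g="\<lambda>s. \<theta> * Fp lam \<beta> s * Fp lam \<gamma> x2", OF _ n1]) (use Fpc[OF s] in \<open>intro continuous_intros\<close>)
    have c2: "isCont (\<lambda>s. C1 (\<theta> * Fp lam (\<beta>+\<gamma>) s)) s"
      by (rule contC1[where g="\<lambda>s. \<theta> * Fp lam (\<beta>+\<gamma>) s", OF _ n2]) (use Fpc[OF s] in \<open>intro continuous_intros\<close>)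
    show ?thesis unfolding ob_def[abs_def] using c1 c2 fpc[OF s]
      by (intro continuous_intros) auto
  qed
  have h3: "0 \<le> ob s" if "0 < s" "s < m" for s
    using inner_int(2)[OF bg, of s x2] that m ob_eq[of s] by simp
  have h4: "(Psi \<longlongrightarrow> 0) (at_right 0)"
  proof -
    have l1: "((\<lambda>s. \<theta> * Fp lam \<beta> s * Fp lam \<gamma> x2) \<longlongrightarrow> \<theta> * 0 * Fp lam \<gamma> x2) (at_right 0)"
      by (intro tendsto_intros Fp_lim0[OF lam bg(1)])
    have l2: "((\<lambda>s. \<theta> * Fp lam (\<beta>+\<gamma>) s) \<longlongrightarrow> \<theta> * 0) (at_right 0)"
      by (intro tendsto_intros Fp_lim0[OF lam bg2])
    have c: "isCont Cs 0" using cont0[of 0] th by simp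
    have "(Psi \<longlongrightarrow> Cs 0 - \<beta> / (\<beta> + \<gamma>) * Cs 0) (at_right 0)"
      unfolding Psi_def[abs_def]
      using isCont_tendsto_compose[OF c, of _ "at_right 0"] l1 l2
      by (intro tendsto_intros) auto
    thus ?thesis by (simp add: Cs_0)
  qed
  have h5: "(Psi \<longlongrightarrow> Psi m) (at_left m)"
  proof -
    have x2: "x2 > 0" using m by simp
    have n1: "norm (\<theta> * Fp lam \<beta> m * Fp lam \<gamma> x2) < \<theta>" using arg2[OF m(1) x2 bg] by simp
    have n2: "norm (\<theta> * Fp lam (\<beta>+\<gamma>) m) < \<theta>" using arg1[OF m(1) bg2] by simp
    have c1: "isCont (\<lambda>s. Cs (\<theta> * Fp lam \<beta> s * Fp lam \<gamma> x2)) m"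
      by (rule contCs[where g="\<lambda>s. \<theta> * Fp lam \<beta> s * Fp lam \<gamma> x2", OF _ n1]) (use Fpc[OF m(1)] in \<open>intro continuous_intros\<close>)
    have c2: "isCont (\<lambda>s. Cs (\<theta> * Fp lam (\<beta>+\<gamma>) s)) m"
      by (rule contCs[where g="\<lambda>s. \<theta> * Fp lam (\<beta>+\<gamma>) s", OF _ n2]) (use Fpc[OF m(1)] in \<open>intro continuous_intros\<close>)
    have "isCont Psi m" unfolding Psi_def[abs_def] using c1 c2 by (intro continuous_intros)
    thus ?thesis unfolding isCont_def by (rule tendsto_within_subset) simp
  qed
  note R = FTC_open[OF m(1) h1 h2 h3 h4 h5]
  have Pm: "Psi m = Cs (\<theta> * F_GE (min x1 x2) \<beta> lam * F_GE x2 \<gamma> lam)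
               - \<beta> / (\<beta> + \<gamma>) * Cs (\<theta> * F_GE (min x1 x2) (\<beta> + \<gamma>) lam)"
    using m unfolding Psi_def m_def by (simp add: F_GE_pos)
  have "(\<integral>\<^sup>+s. \<integral>\<^sup>+t. ennreal (hh \<beta> \<gamma> s t) * indicator (RR x1 x2) (s, t) \<partial>lborel \<partial>lborel)
      = (\<integral>\<^sup>+s. ennreal (ob s) * indicator {0<..<m} s \<partial>lborel)"
  proof (rule nn_integral_cong_AE)
    show "AE s in lborel. (\<integral>\<^sup>+t. ennreal (hh \<beta> \<gamma> s t) * indicator (RR x1 x2) (s, t) \<partial>lborel)
        = ennreal (ob s) * indicator {0<..<m} s"
      using AE_lborel_singleton[of m] by eventually_elim (rule inner)
  qed
  also have "\<dots> = ennreal (Psi m - 0)" by (rule R(1))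
  finally have a1: "(\<integral>\<^sup>+s. \<integral>\<^sup>+t. ennreal (hh \<beta> \<gamma> s t) * indicator (RR x1 x2) (s, t) \<partial>lborel \<partial>lborel)
    = ennreal (Cs (\<theta> * F_GE (min x1 x2) \<beta> lam * F_GE x2 \<gamma> lam)
               - \<beta> / (\<beta> + \<gamma>) * Cs (\<theta> * F_GE (min x1 x2) (\<beta> + \<gamma>) lam))" using Pm by simp
  have a2: "0 \<le> Cs (\<theta> * F_GE (min x1 x2) \<beta> lam * F_GE x2 \<gamma> lam)
               - \<beta> / (\<beta> + \<gamma>) * Cs (\<theta> * F_GE (min x1 x2) (\<beta> + \<gamma>) lam)"
    using R(2) Pm by simp
  show ?thesis using a1 a2 by blast
qed

lemmas lemA = lemA0[THEN conjunct1] lemA0[THEN conjunct2]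

end

context bge
begin

lemma F_GE_add: assumes "\<beta> > 0" "\<gamma> > 0"
  shows "F_GE y \<beta> lam * F_GE y \<gamma> lam = F_GE y (\<beta> + \<gamma>) lam"
  by (cases "y > 0") (simp_all add: F_GE_pos Fp_add[OF lam] F_GE_npos)

lemma F_GE_bounds: assumes "\<beta> > 0" shows "0 \<le> F_GE y \<beta> lam" "F_GE y \<beta> lam < 1"
  using Fp_bounds[OF lam, of y \<beta>] assms
  by (cases "y > 0"; simp add: F_GE_pos F_GE_npos)+

lemma lemD: assumes al: "\<alpha> > 0"
  shows "(\<integral>\<^sup>+y. ennreal (\<theta> * fp lam \<alpha> y * C1 (\<theta> * Fp lam \<alpha> y)) * indicator {0<..x} y \<partial>lborel)
     = ennreal (Cs (\<theta> * F_GE x \<alpha> lam))"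
proof (cases "x \<le> 0")
  case True
  then have "indicator {0<..x} y = (0::ennreal)" for y by (auto split: split_indicator)
  then show ?thesis using True by (simp add: F_GE_npos Cs_0)
next
  case False
  hence x: "x > 0" by simp
  define F where "F y = Cs (\<theta> * Fp lam \<alpha> y)" for y
  have "(\<integral>\<^sup>+y. ennreal (\<theta> * fp lam \<alpha> y * C1 (\<theta> * Fp lam \<alpha> y)) * indicator {0<..x} y \<partial>lborel)
      = (\<integral>\<^sup>+y. ennreal (\<theta> * fp lam \<alpha> y * C1 (\<theta> * Fp lam \<alpha> y)) * indicator {0<..<x} y \<partial>lborel)"
  proof (rule nn_integral_cong_AE)
    show "AE y in lborel. ennreal (\<theta> * fp lam \<alpha> y * C1 (\<theta> * Fp lam \<alpha> y)) * indicator {0<..x} y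
        = ennreal (\<theta> * fp lam \<alpha> y * C1 (\<theta> * Fp lam \<alpha> y)) * indicator {0<..<x} y"
      using AE_lborel_singleton[of x] by eventually_elim (auto split: split_indicator)
  qed
  also have "\<dots> = ennreal (F x - 0)"
  proof (rule FTC_open(1)[OF x])
    show "DERIV F y :> \<theta> * fp lam \<alpha> y * C1 (\<theta> * Fp lam \<alpha> y)" if "0 < y" "y < x" for y
    proof -
      have y: "y > 0" using that by simp
      have d: "DERIV (\<lambda>y. \<theta> * Fp lam \<alpha> y) y :> \<theta> * fp lam \<alpha> y"
        using DERIV_cmult[OF Fp_deriv[OF lam y], of \<theta> \<alpha>] by simp
      have n: "norm (\<theta> * Fp lam \<alpha> y) < \<theta>" using arg1[OF y al] by simp
      show ?thesis unfolding F_def[abs_def]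
        using DERIV_chain2[OF D0[OF n] d] by (simp add: ac_simps)
    qed
    show "isCont (\<lambda>y. \<theta> * fp lam \<alpha> y * C1 (\<theta> * Fp lam \<alpha> y)) y" if "0 < y" "y < x" for y
    proof -
      have y: "y > 0" using that by simp
      have n: "norm (\<theta> * Fp lam \<alpha> y) < \<theta>" using arg1[OF y al] by simp
      have "isCont (\<lambda>y. C1 (\<theta> * Fp lam \<alpha> y)) y"
        by (rule contC1[where g="\<lambda>y. \<theta> * Fp lam \<alpha> y", OF _ n]) (use Fpc[OF y] in \<open>intro continuous_intros\<close>)
      then show ?thesis using fpc[OF y] by (intro continuous_intros)
    qed
    show "0 \<le> \<theta> * fp lam \<alpha> y * C1 (\<theta> * Fp lam \<alpha> y)" if "0 < y" "y < x" for y
    proof -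
      have y: "y > 0" using that by simp
      show ?thesis using arg1[OF y al] C1_nn[of "\<theta> * Fp lam \<alpha> y"] fp_nn[OF lam y al] th by simp
    qed
    show "(F \<longlongrightarrow> 0) (at_right 0)"
    proof -
      have l2: "((\<lambda>s. \<theta> * Fp lam \<alpha> s) \<longlongrightarrow> \<theta> * 0) (at_right 0)"
        by (intro tendsto_intros Fp_lim0[OF lam al])
      have c: "isCont Cs 0" using cont0[of 0] th by simp
      have "(F \<longlongrightarrow> Cs 0) (at_right 0)"
        unfolding F_def[abs_def] using isCont_tendsto_compose[OF c, of "\<lambda>s. \<theta> * Fp lam \<alpha> s"] l2 by simp
      thus ?thesis by (simp add: Cs_0)
    qed
    show "(F \<longlongrightarrow> F x) (at_left x)"
    proof -
      have n: "norm (\<theta> * Fp lam \<alpha> x) < \<theta>" using arg1[OF x al] by simp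
      have "isCont F x" unfolding F_def[abs_def]
        by (rule contCs[where g="\<lambda>y. \<theta> * Fp lam \<alpha> y", OF _ n]) (use Fpc[OF x] in \<open>intro continuous_intros\<close>)
      thus ?thesis unfolding isCont_def by (rule tendsto_within_subset) simp
    qed
  qed
  also have "\<dots> = ennreal (Cs (\<theta> * F_GE x \<alpha> lam))" using x by (simp add: F_def F_GE_pos)
  finally show ?thesis .
qed

lemma meas_ind:
  fixes g :: "'a::topological_space \<Rightarrow> real"
  assumes "S \<in> sets borel" "continuous_on S g"
  shows "(\<lambda>p. ennreal (g p) * indicator S p) \<in> borel_measurable borel"
proof -
  have "(\<lambda>x. indicator S x *\<^sub>R g x) \<in> borel_measurable borel"
    by (rule borel_measurable_continuous_on_indicator[OF assms])
  hence "(\<lambda>x. ennreal (indicator S x *\<^sub>R g x)) \<in> borel_measurable borel" by measurable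
  moreover have "ennreal (indicator S x *\<^sub>R g x) = ennreal (g x) * indicator S x" for x
    by (simp split: split_indicator)
  ultimately show ?thesis by simp
qed

lemma hh_cont_on: assumes "S \<subseteq> {p. 0 < fst p \<and> 0 < snd p}" "\<beta> > 0" "\<gamma> > 0"
  shows "continuous_on S (\<lambda>p. hh \<beta> \<gamma> (fst p) (snd p))"
proof (rule continuous_at_imp_continuous_on, safe)
  fix s t assume "(s, t) \<in> S"
  then show "isCont (\<lambda>p. hh \<beta> \<gamma> (fst p) (snd p)) (s, t)"
    using hh_cont[of s t \<beta> \<gamma>] assms by auto
qed

lemma hh_cont_on_swap: assumes "S \<subseteq> {p. 0 < fst p \<and> 0 < snd p}" "\<beta> > 0" "\<gamma> > 0"
  shows "continuous_on S (\<lambda>p. hh \<beta> \<gamma> (snd p) (fst p))"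
proof (rule continuous_at_imp_continuous_on, safe)
  fix s t assume st: "(s, t) \<in> S"
  have h: "isCont (\<lambda>p. hh \<beta> \<gamma> (fst p) (snd p)) (t, s)"
    using hh_cont[of t s \<beta> \<gamma>] assms st by auto
  have sw: "isCont (\<lambda>p::real\<times>real. (snd p, fst p)) (s, t)" by (intro continuous_intros)
  from isCont_o2[OF sw, of "\<lambda>p. hh \<beta> \<gamma> (fst p) (snd p)"] h
  show "isCont (\<lambda>p. hh \<beta> \<gamma> (snd p) (fst p)) (s, t)" by simp
qed

lemma f1_eq: assumes "y1 > 0" "y2 > 0" "\<alpha>1 > 0" "\<alpha>2 > 0" "\<alpha>3 > 0"
  shows "BGEPS_f1 a \<alpha>1 \<alpha>2 \<alpha>3 lam \<theta> y1 y2 = hh (\<alpha>1 + \<alpha>3) \<alpha>2 y1 y2 / PS_C a \<theta>"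
proof -
  let ?K = "\<theta> * Fp lam (\<alpha>1 + \<alpha>3) y1 * Fp lam \<alpha>2 y2"
  have n: "norm ?K < \<theta>" using arg2[OF assms(1,2), of "\<alpha>1 + \<alpha>3" \<alpha>2] assms by simp
  have e: "\<theta> * (Fp lam (\<alpha>1 + \<alpha>3) y1 * Fp lam \<alpha>2 y2) = ?K" by (simp add: mult.assoc)
  have d1: "deriv (PS_C a) ?K = C1 ?K" by (rule deriv_PS[OF n])
  have d2: "deriv (deriv (PS_C a)) ?K = C2 ?K" by (rule deriv2_PS[OF n])
  show ?thesis
    unfolding BGEPS_f1_def Let_def F_GE_pos[OF assms(1)] F_GE_pos[OF assms(2)]
      f_GE_pos[OF assms(1)] f_GE_pos[OF assms(2)] e d1 d2 hh_def
    by simp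
qed

lemma f2_eq: assumes "y1 > 0" "y2 > 0" "\<alpha>1 > 0" "\<alpha>2 > 0" "\<alpha>3 > 0"
  shows "BGEPS_f2 a \<alpha>1 \<alpha>2 \<alpha>3 lam \<theta> y1 y2 = hh (\<alpha>2 + \<alpha>3) \<alpha>1 y2 y1 / PS_C a \<theta>"
proof -
  let ?K = "\<theta> * Fp lam (\<alpha>2 + \<alpha>3) y2 * Fp lam \<alpha>1 y1"
  have n: "norm ?K < \<theta>" using arg2[OF assms(2,1), of "\<alpha>2 + \<alpha>3" \<alpha>1] assms by simp
  have e: "\<theta> * (Fp lam \<alpha>1 y1 * Fp lam (\<alpha>2 + \<alpha>3) y2) = ?K" by (simp add: ac_simps)
  have d1: "deriv (PS_C a) ?K = C1 ?K" by (rule deriv_PS[OF n])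
  have d2: "deriv (deriv (PS_C a)) ?K = C2 ?K" by (rule deriv2_PS[OF n])
  show ?thesis
    unfolding BGEPS_f2_def Let_def F_GE_pos[OF assms(1)] F_GE_pos[OF assms(2)]
      f_GE_pos[OF assms(1)] f_GE_pos[OF assms(2)] e d1 d2 hh_def
    by (simp add: ac_simps)
qed

lemma f0_eq: assumes "y > 0" "\<alpha>1 > 0" "\<alpha>2 > 0" "\<alpha>3 > 0"
  shows "BGEPS_f0 a \<alpha>1 \<alpha>2 \<alpha>3 lam \<theta> y = \<alpha>3 / (PS_C a \<theta> * (\<alpha>1 + \<alpha>2 + \<alpha>3)) *
     (\<theta> * fp lam (\<alpha>1 + \<alpha>2 + \<alpha>3) y * C1 (\<theta> * Fp lam (\<alpha>1 + \<alpha>2 + \<alpha>3) y))"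
proof -
  have n: "norm (\<theta> * Fp lam (\<alpha>1 + \<alpha>2 + \<alpha>3) y) < \<theta>" using arg1[OF assms(1), of "\<alpha>1 + \<alpha>2 + \<alpha>3"] assms by simp
  show ?thesis
    unfolding BGEPS_f0_def Let_def using assms
    by (simp add: F_GE_pos f_GE_pos deriv_PS[OF n])
qed

lemma diag_cont_on: assumes "S \<subseteq> {0<..}" "al > 0"
  shows "continuous_on S (\<lambda>y. \<theta> * fp lam al y * C1 (\<theta> * Fp lam al y))"
proof (rule continuous_at_imp_continuous_on, safe)
  fix y assume "y \<in> S"
  hence y: "y > 0" using assms by auto
  have n: "norm (\<theta> * Fp lam al y) < \<theta>" using arg1[OF y assms(2)] by simp
  have "isCont (\<lambda>y. C1 (\<theta> * Fp lam al y)) y"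
    by (rule contC1[where g="\<lambda>y. \<theta> * Fp lam al y", OF _ n]) (use Fpc[OF y] in \<open>intro continuous_intros\<close>)
  then show "isCont (\<lambda>y. \<theta> * fp lam al y * C1 (\<theta> * Fp lam al y)) y" using fpc[OF y] by (intro continuous_intros)
qed

end

lemma fst_bm[measurable]: "fst \<in> borel_measurable (borel :: (real\<times>real) measure)"
  by (intro borel_measurable_continuous_onI continuous_intros)
lemma snd_bm[measurable]: "snd \<in> borel_measurable (borel :: (real\<times>real) measure)"
  by (intro borel_measurable_continuous_onI continuous_intros)
lemma borel_Collect: "Measurable.pred borel P \<Longrightarrow> {x. P x} \<in> sets borel"
  by (simp add: pred_def)

lemma tonelli_fst: fixes F :: "real \<times> real \<Rightarrow> ennreal"
  assumes "F \<in> borel_measurable borel"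
  shows "(\<integral>\<^sup>+p. F p \<partial>lborel) = (\<integral>\<^sup>+x. \<integral>\<^sup>+y. F (x, y) \<partial>lborel \<partial>lborel)"
proof -
  have m: "F \<in> borel_measurable (lborel \<Otimes>\<^sub>M lborel)" using assms by (simp add: lborel_prod)
  show ?thesis using lborel.nn_integral_fst[OF m] by (simp add: lborel_prod)
qed

lemma tonelli_snd: fixes F :: "real \<times> real \<Rightarrow> ennreal"
  assumes "F \<in> borel_measurable borel"
  shows "(\<integral>\<^sup>+p. F p \<partial>lborel) = (\<integral>\<^sup>+y. \<integral>\<^sup>+x. F (x, y) \<partial>lborel \<partial>lborel)"
proof -
  have m: "F \<in> borel_measurable (lborel \<Otimes>\<^sub>M lborel)" using assms by (simp add: lborel_prod)
  show ?thesis using lborel_pair.nn_integral_snd[OF m] by (simp add: lborel_prod)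
qed

locale bge3 = bge +
  fixes \<alpha>1 \<alpha>2 \<alpha>3 :: real
  assumes pos: "\<alpha>1 > 0" "\<alpha>2 > 0" "\<alpha>3 > 0" and CCpos: "PS_C a \<theta> > 0"
begin

definition "CC = PS_C a \<theta>"
definition "al = \<alpha>1 + \<alpha>2 + \<alpha>3"
definition "k0 = \<alpha>3 / (CC * al)"
definition "P12 = {p::real\<times>real. 0 < fst p \<and> fst p < snd p}"
definition "P21 = {p::real\<times>real. 0 < snd p \<and> snd p < fst p}"
definition "g1 p = ennreal (hh (\<alpha>1 + \<alpha>3) \<alpha>2 (fst p) (snd p) / CC) * indicator P12 p"
definition "g2 p = ennreal (hh (\<alpha>2 + \<alpha>3) \<alpha>1 (snd p) (fst p) / CC) * indicator P21 p"
definition "g0 y = ennreal (k0 * (\<theta> * fp lam al y * C1 (\<theta> * Fp lam al y))) * indicator {0<..} y"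
definition "nu1 = density lborel g1"
definition "nu2 = density lborel g2"
definition "nu0 = distr (density lborel g0) borel (\<lambda>y::real. (y, y))"
definition "mu A = emeasure nu1 A + emeasure nu2 A + emeasure nu0 A"
definition "NN = measure_of UNIV (sets borel) mu"

lemma CC: "CC > 0" using CCpos by (simp add: CC_def)
lemma al: "al > 0" using pos by (simp add: al_def)
lemma k0: "k0 \<ge> 0" using CC al pos by (simp add: k0_def)

lemma P12_borel: "P12 \<in> sets borel" unfolding P12_def by (rule borel_Collect) measurable
lemma P21_borel: "P21 \<in> sets borel" unfolding P21_def by (rule borel_Collect) measurable

lemma g1_meas: "g1 \<in> borel_measurable borel"
proof -
  have "continuous_on P12 (\<lambda>p. hh (\<alpha>1 + \<alpha>3) \<alpha>2 (fst p) (snd p) / CC)"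
  proof -
    have "P12 \<subseteq> {p. 0 < fst p \<and> 0 < snd p}" by (auto simp: P12_def)
    from hh_cont_on[OF this, of "\<alpha>1 + \<alpha>3" \<alpha>2] pos CC show ?thesis
      by (intro continuous_intros) auto
  qed
  from meas_ind[OF P12_borel this] show ?thesis unfolding g1_def[abs_def] .
qed

lemma g2_meas: "g2 \<in> borel_measurable borel"
proof -
  have "continuous_on P21 (\<lambda>p. hh (\<alpha>2 + \<alpha>3) \<alpha>1 (snd p) (fst p) / CC)"
  proof -
    have "P21 \<subseteq> {p. 0 < fst p \<and> 0 < snd p}" by (auto simp: P21_def)
    from hh_cont_on_swap[OF this, of "\<alpha>2 + \<alpha>3" \<alpha>1] pos CC show ?thesis
      by (intro continuous_intros) auto
  qed
  from meas_ind[OF P21_borel this] show ?thesis unfolding g2_def[abs_def] .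
qed

lemma g0_meas: "g0 \<in> borel_measurable borel"
proof -
  have "continuous_on {0<..} (\<lambda>y. k0 * (\<theta> * fp lam al y * C1 (\<theta> * Fp lam al y)))"
    using continuous_on_mult[OF continuous_on_const diag_cont_on[of "{0<..}" al]] al by auto
  from meas_ind[OF _ this] show ?thesis unfolding g0_def[abs_def] by simp
qed

lemma sets_nu: "sets nu1 = sets borel" "sets nu2 = sets borel" "sets nu0 = sets borel"
  by (simp_all add: nu1_def nu2_def nu0_def)

lemma sets_NN: "sets NN = sets borel"
  unfolding NN_def using sigma_algebra.sets_measure_of_eq[OF sets.sigma_algebra_axioms[of borel]] by simp

lemma emeasure_NN: assumes "A \<in> sets borel" shows "emeasure NN A = mu A"
  unfolding NN_def
proof (rule emeasure_measure_of_sigma[OF _ _ _ assms])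
  show "sigma_algebra UNIV (sets borel)" using sets.sigma_algebra_axioms[of borel] by simp
  show "positive (sets borel) mu" by (simp add: positive_def mu_def)
  show "countably_additive (sets borel) mu"
    unfolding countably_additive_def
  proof (intro allI impI)
    fix A :: "nat \<Rightarrow> (real \<times> real) set"
    assume A: "range A \<subseteq> sets borel" "disjoint_family A"
    have "(\<Sum>i. mu (A i)) = (\<Sum>i. emeasure nu1 (A i)) + (\<Sum>i. emeasure nu2 (A i)) + (\<Sum>i. emeasure nu0 (A i))"
      unfolding mu_def by (simp add: suminf_add[symmetric])
    also have "\<dots> = mu (\<Union>i. A i)"
      unfolding mu_def using A sets_nu by (simp add: suminf_emeasure)
    finally show "(\<Sum>i. mu (A i)) = mu (\<Union>i. A i)" .
  qed
qed

lemma Q_borel: "{p::real\<times>real. fst p \<le> x1 \<and> snd p \<le> x2} \<in> sets borel"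
  by (rule borel_Collect) measurable
lemma RR_borel: "RR x1 x2 \<in> sets borel"
  unfolding RR_def by (rule borel_Collect) measurable

lemma nu1_quad:
  "emeasure nu1 {p. fst p \<le> x1 \<and> snd p \<le> x2} = ennreal (1/CC) *
    ennreal (Cs (\<theta> * F_GE (min x1 x2) (\<alpha>1 + \<alpha>3) lam * F_GE x2 \<alpha>2 lam)
               - (\<alpha>1 + \<alpha>3) / (\<alpha>1 + \<alpha>3 + \<alpha>2) * Cs (\<theta> * F_GE (min x1 x2) (\<alpha>1 + \<alpha>3 + \<alpha>2) lam))"
proof -
  let ?Q = "{p::real\<times>real. fst p \<le> x1 \<and> snd p \<le> x2}"
  let ?F = "\<lambda>p. ennreal (hh (\<alpha>1 + \<alpha>3) \<alpha>2 (fst p) (snd p)) * indicator (RR x1 x2) p"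
  have b: "\<alpha>1 + \<alpha>3 > 0" using pos by simp
  have RRpos: "RR x1 x2 \<subseteq> {p. 0 < fst p \<and> 0 < snd p}" by (auto simp: RR_def)
  have hm: "?F \<in> borel_measurable borel"
    by (rule meas_ind[OF RR_borel hh_cont_on[OF RRpos b pos(2)]])
  have pw: "g1 p * indicator ?Q p = ennreal (1/CC) * ?F p" for p
  proof (cases "p \<in> RR x1 x2")
    case True
    then have p: "0 < fst p" "0 < snd p" "p \<in> P12" "p \<in> ?Q" by (auto simp: RR_def P12_def)
    have "ennreal (hh (\<alpha>1 + \<alpha>3) \<alpha>2 (fst p) (snd p) / CC) = ennreal (1/CC) * ennreal (hh (\<alpha>1 + \<alpha>3) \<alpha>2 (fst p) (snd p))"
      using CC by (simp add: ennreal_mult'[symmetric])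
    then show ?thesis using True p by (simp add: g1_def)
  next
    case False
    then have "\<not> (p \<in> P12 \<and> p \<in> ?Q)" by (auto simp: RR_def P12_def)
    then show ?thesis using False by (auto simp: g1_def split: split_indicator)
  qed
  have "emeasure nu1 ?Q = (\<integral>\<^sup>+p. g1 p * indicator ?Q p \<partial>lborel)"
    unfolding nu1_def by (rule emeasure_density) (use g1_meas Q_borel in auto)
  also have "\<dots> = (\<integral>\<^sup>+p. ennreal (1/CC) * ?F p \<partial>lborel)" by (simp add: pw)
  also have "\<dots> = ennreal (1/CC) * (\<integral>\<^sup>+p. ?F p \<partial>lborel)"
    by (rule nn_integral_cmult) (use hm in simp)
  also have "(\<integral>\<^sup>+p. ?F p \<partial>lborel) = (\<integral>\<^sup>+x. \<integral>\<^sup>+y. ?F (x, y) \<partial>lborel \<partial>lborel)"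
    by (rule tonelli_fst[OF hm])
  also have "\<dots> = ennreal (Cs (\<theta> * F_GE (min x1 x2) (\<alpha>1 + \<alpha>3) lam * F_GE x2 \<alpha>2 lam)
               - (\<alpha>1 + \<alpha>3) / (\<alpha>1 + \<alpha>3 + \<alpha>2) * Cs (\<theta> * F_GE (min x1 x2) (\<alpha>1 + \<alpha>3 + \<alpha>2) lam))"
    using lemA(1)[OF b pos(2), of x1 x2] by simp
  finally show ?thesis .
qed

lemma nu2_quad:
  "emeasure nu2 {p. fst p \<le> x1 \<and> snd p \<le> x2} = ennreal (1/CC) *
    ennreal (Cs (\<theta> * F_GE (min x2 x1) (\<alpha>2 + \<alpha>3) lam * F_GE x1 \<alpha>1 lam)
               - (\<alpha>2 + \<alpha>3) / (\<alpha>2 + \<alpha>3 + \<alpha>1) * Cs (\<theta> * F_GE (min x2 x1) (\<alpha>2 + \<alpha>3 + \<alpha>1) lam))"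
proof -
  let ?Q = "{p::real\<times>real. fst p \<le> x1 \<and> snd p \<le> x2}"
  let ?S = "{p::real\<times>real. 0 < snd p \<and> snd p < fst p \<and> snd p \<le> x2 \<and> fst p \<le> x1}"
  let ?F = "\<lambda>p. ennreal (hh (\<alpha>2 + \<alpha>3) \<alpha>1 (snd p) (fst p)) * indicator ?S p"
  have b: "\<alpha>2 + \<alpha>3 > 0" using pos by simp
  have Sb: "?S \<in> sets borel" by (rule borel_Collect) measurable
  have Spos: "?S \<subseteq> {p. 0 < fst p \<and> 0 < snd p}" by auto
  have hm: "?F \<in> borel_measurable borel"
    by (rule meas_ind[OF Sb hh_cont_on_swap[OF Spos b pos(1)]])
  have pw: "g2 p * indicator ?Q p = ennreal (1/CC) * ?F p" for p
  proof (cases "p \<in> ?S")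
    case True
    then have p: "0 < fst p" "0 < snd p" "p \<in> P21" "p \<in> ?Q" by (auto simp: P21_def)
    have "ennreal (hh (\<alpha>2 + \<alpha>3) \<alpha>1 (snd p) (fst p) / CC) = ennreal (1/CC) * ennreal (hh (\<alpha>2 + \<alpha>3) \<alpha>1 (snd p) (fst p))"
      using CC by (simp add: ennreal_mult'[symmetric])
    then show ?thesis using True p by (simp add: g2_def)
  next
    case False
    then have "\<not> (p \<in> P21 \<and> p \<in> ?Q)" by (auto simp: P21_def)
    then show ?thesis using False by (auto simp: g2_def split: split_indicator)
  qed
  have ind: "indicator ?S (x, y) = (indicator (RR x2 x1) (y, x) :: ennreal)" for x y
    by (auto simp: RR_def split: split_indicator)
  have "emeasure nu2 ?Q = (\<integral>\<^sup>+p. g2 p * indicator ?Q p \<partial>lborel)"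
    unfolding nu2_def by (rule emeasure_density) (use g2_meas Q_borel in auto)
  also have "\<dots> = (\<integral>\<^sup>+p. ennreal (1/CC) * ?F p \<partial>lborel)" by (simp add: pw)
  also have "\<dots> = ennreal (1/CC) * (\<integral>\<^sup>+p. ?F p \<partial>lborel)"
    by (rule nn_integral_cmult) (use hm in simp)
  also have "(\<integral>\<^sup>+p. ?F p \<partial>lborel) = (\<integral>\<^sup>+y. \<integral>\<^sup>+x. ?F (x, y) \<partial>lborel \<partial>lborel)"
    by (rule tonelli_snd[OF hm])
  also have "\<dots> = (\<integral>\<^sup>+y. \<integral>\<^sup>+x. ennreal (hh (\<alpha>2 + \<alpha>3) \<alpha>1 y x) * indicator (RR x2 x1) (y, x) \<partial>lborel \<partial>lborel)"
    by (simp only: ind fst_conv snd_conv)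
  also have "\<dots> = ennreal (Cs (\<theta> * F_GE (min x2 x1) (\<alpha>2 + \<alpha>3) lam * F_GE x1 \<alpha>1 lam)
               - (\<alpha>2 + \<alpha>3) / (\<alpha>2 + \<alpha>3 + \<alpha>1) * Cs (\<theta> * F_GE (min x2 x1) (\<alpha>2 + \<alpha>3 + \<alpha>1) lam))"
    by (rule lemA(1)[OF b pos(1)])
  finally show ?thesis .
qed

lemma nu0_quad:
  "emeasure nu0 {p. fst p \<le> x1 \<and> snd p \<le> x2} = ennreal k0 * ennreal (Cs (\<theta> * F_GE (min x1 x2) al lam))"
proof -
  let ?Q = "{p::real\<times>real. fst p \<le> x1 \<and> snd p \<le> x2}"
  let ?F = "\<lambda>y. ennreal (\<theta> * fp lam al y * C1 (\<theta> * Fp lam al y)) * indicator {0<..min x1 x2} y"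
  have hm: "?F \<in> borel_measurable borel"
    by (rule meas_ind[OF _ diag_cont_on[OF _ al]]) auto
  have dm: "(\<lambda>y::real. (y, y)) \<in> measurable (density lborel g0) borel"
    by (simp add: measurable_cong_sets[OF sets_density refl] borel_measurable_continuous_onI continuous_intros)
  have pre: "(\<lambda>y::real. (y, y)) -` ?Q \<inter> space (density lborel g0) = {..min x1 x2}" by auto
  have pw: "g0 y * indicator {..min x1 x2} y = ennreal k0 * ?F y" for y
    using k0 by (auto simp: g0_def ennreal_mult' split: split_indicator)
  have "emeasure nu0 ?Q = emeasure (density lborel g0) {..min x1 x2}"
  proof -
    have e: "{y::real. y \<le> x1 \<and> y \<le> x2} = {..min x1 x2}" by auto
    show ?thesis unfolding nu0_def using pre by (simp add: emeasure_distr[OF dm Q_borel] e)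
  qed
  also have "\<dots> = (\<integral>\<^sup>+y. g0 y * indicator {..min x1 x2} y \<partial>lborel)"
    by (rule emeasure_density) (use g0_meas in auto)
  also have "\<dots> = (\<integral>\<^sup>+y. ennreal k0 * ?F y \<partial>lborel)" by (simp add: pw)
  also have "\<dots> = ennreal k0 * (\<integral>\<^sup>+y. ?F y \<partial>lborel)"
    by (rule nn_integral_cmult) (use hm in simp)
  also have "(\<integral>\<^sup>+y. ?F y \<partial>lborel) = ennreal (Cs (\<theta> * F_GE (min x1 x2) al lam))"
    by (rule lemD[OF al])
  finally show ?thesis .
qed

lemma alg1: "(A - (\<alpha>1 + \<alpha>3) / al * G) / CC + (G - (\<alpha>2 + \<alpha>3) / al * G) / CC + k0 * G = A / CC"
proof -
  have "al \<noteq> 0" "CC \<noteq> 0" using CC al by auto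
  then show ?thesis unfolding k0_def by (simp add: field_simps) (simp add: al_def algebra_simps)
qed
lemma alg2: "(G - (\<alpha>1 + \<alpha>3) / al * G) / CC + (A - (\<alpha>2 + \<alpha>3) / al * G) / CC + k0 * G = A / CC"
proof -
  have "al \<noteq> 0" "CC \<noteq> 0" using CC al by auto
  then show ?thesis unfolding k0_def by (simp add: field_simps) (simp add: al_def algebra_simps)
qed

lemma quad: "emeasure NN {p. fst p \<le> x1 \<and> snd p \<le> x2} = ennreal (BGEPS_cdf a \<alpha>1 \<alpha>2 \<alpha>3 lam \<theta> x1 x2)"
proof -
  let ?Q = "{p::real\<times>real. fst p \<le> x1 \<and> snd p \<le> x2}"
  define m where "m = min x1 x2"
  have e1: "\<alpha>1 + \<alpha>3 + \<alpha>2 = al" "\<alpha>2 + \<alpha>3 + \<alpha>1 = al" by (simp_all add: al_def)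
  have mm: "min x2 x1 = m" by (simp add: m_def)
  have b1: "\<alpha>1 + \<alpha>3 > 0" and b2: "\<alpha>2 + \<alpha>3 > 0" using pos by simp_all
  define X1 where "X1 = Cs (\<theta> * F_GE m (\<alpha>1 + \<alpha>3) lam * F_GE x2 \<alpha>2 lam) - (\<alpha>1 + \<alpha>3) / al * Cs (\<theta> * F_GE m al lam)"
  define X2 where "X2 = Cs (\<theta> * F_GE m (\<alpha>2 + \<alpha>3) lam * F_GE x1 \<alpha>1 lam) - (\<alpha>2 + \<alpha>3) / al * Cs (\<theta> * F_GE m al lam)"
  define X0 where "X0 = Cs (\<theta> * F_GE m al lam)"
  have X1nn: "0 \<le> X1" using lemA(2)[OF b1 pos(2), of x1 x2] unfolding X1_def m_def e1 .
  have X2nn: "0 \<le> X2" using lemA(2)[OF b2 pos(1), of x2 x1] unfolding X2_def mm[unfolded m_def] e1 m_def .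
  have X0nn: "0 \<le> X0" unfolding X0_def
    using F_GE_bounds[OF al, of m] th by (intro Cs_nn) auto
  have "emeasure NN ?Q = mu ?Q" by (rule emeasure_NN[OF Q_borel])
  also have "\<dots> = ennreal (1/CC) * ennreal X1 + ennreal (1/CC) * ennreal X2 + ennreal k0 * ennreal X0"
    unfolding mu_def nu1_quad nu2_quad nu0_quad X1_def X2_def X0_def e1 mm m_def ..
  also have "\<dots> = ennreal (X1/CC + X2/CC + k0 * X0)"
  proof -
    have c0: "0 \<le> 1/CC" using CC by simp
    have n1: "0 \<le> X1/CC" "0 \<le> X2/CC" "0 \<le> k0 * X0" using X1nn X2nn X0nn CC k0 by simp_all
    have "ennreal (1/CC) * ennreal X1 = ennreal (X1/CC)" using ennreal_mult'[OF c0, of X1] by simp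
    moreover have "ennreal (1/CC) * ennreal X2 = ennreal (X2/CC)" using ennreal_mult'[OF c0, of X2] by simp
    moreover have "ennreal k0 * ennreal X0 = ennreal (k0 * X0)" using ennreal_mult'[OF k0, of X0] by simp
    moreover have "ennreal (X1/CC) + ennreal (X2/CC) = ennreal (X1/CC + X2/CC)"
      by (rule ennreal_plus[OF n1(1,2), symmetric])
    moreover have "ennreal (X1/CC + X2/CC) + ennreal (k0 * X0) = ennreal (X1/CC + X2/CC + k0 * X0)"
      using n1 by (intro ennreal_plus[symmetric]) auto
    ultimately show ?thesis by simp
  qed
  also have "X1/CC + X2/CC + k0 * X0 = BGEPS_cdf a \<alpha>1 \<alpha>2 \<alpha>3 lam \<theta> x1 x2"
  proof (cases "x1 \<le> x2")
    case True
    hence m: "m = x1" by (simp add: m_def)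
    have p: "\<theta> * F_GE x1 (\<alpha>2 + \<alpha>3) lam * F_GE x1 \<alpha>1 lam = \<theta> * F_GE x1 al lam"
      using F_GE_add[OF b2 pos(1), of x1] e1 by (simp add: mult.assoc)
    have cdf: "BGEPS_cdf a \<alpha>1 \<alpha>2 \<alpha>3 lam \<theta> x1 x2 = Cs (\<theta> * F_GE x1 (\<alpha>1 + \<alpha>3) lam * F_GE x2 \<alpha>2 lam) / CC"
      unfolding BGEPS_cdf_def CC_def using True by (simp add: PS_eq)
    have x1e: "X1 = Cs (\<theta> * F_GE x1 (\<alpha>1 + \<alpha>3) lam * F_GE x2 \<alpha>2 lam) - (\<alpha>1 + \<alpha>3) / al * X0"
      unfolding X1_def X0_def m ..
    have x2e: "X2 = X0 - (\<alpha>2 + \<alpha>3) / al * X0" unfolding X2_def X0_def m p ..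
    show ?thesis unfolding cdf x1e x2e by (rule alg1)
  next
    case False
    hence m: "m = x2" by (simp add: m_def)
    have p: "\<theta> * F_GE x2 (\<alpha>1 + \<alpha>3) lam * F_GE x2 \<alpha>2 lam = \<theta> * F_GE x2 al lam"
      using F_GE_add[OF b1 pos(2), of x2] e1 by (simp add: mult.assoc)
    have q: "\<theta> * F_GE x2 (\<alpha>2 + \<alpha>3) lam * F_GE x1 \<alpha>1 lam = \<theta> * F_GE x1 \<alpha>1 lam * F_GE x2 (\<alpha>2 + \<alpha>3) lam"
      by (simp add: ac_simps)
    have cdf: "BGEPS_cdf a \<alpha>1 \<alpha>2 \<alpha>3 lam \<theta> x1 x2 = Cs (\<theta> * F_GE x1 \<alpha>1 lam * F_GE x2 (\<alpha>2 + \<alpha>3) lam) / CC"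
      unfolding BGEPS_cdf_def CC_def using False by (simp add: PS_eq)
    have x1e: "X1 = X0 - (\<alpha>1 + \<alpha>3) / al * X0"
      unfolding X1_def X0_def m p ..
    have x2e: "X2 = Cs (\<theta> * F_GE x1 \<alpha>1 lam * F_GE x2 (\<alpha>2 + \<alpha>3) lam) - (\<alpha>2 + \<alpha>3) / al * X0"
      unfolding X2_def X0_def m q ..
    show ?thesis unfolding cdf x1e x2e by (rule alg2)
  qed
  finally show ?thesis .
qed

lemma cont_g1: "continuous_on P12 (\<lambda>p. hh (\<alpha>1 + \<alpha>3) \<alpha>2 (fst p) (snd p) / CC)"
proof -
  have "P12 \<subseteq> {p. 0 < fst p \<and> 0 < snd p}" by (auto simp: P12_def)
  from hh_cont_on[OF this, of "\<alpha>1 + \<alpha>3" \<alpha>2] pos CC show ?thesis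
    by (intro continuous_intros) auto
qed

lemma cont_g2: "continuous_on P21 (\<lambda>p. hh (\<alpha>2 + \<alpha>3) \<alpha>1 (snd p) (fst p) / CC)"
proof -
  have "P21 \<subseteq> {p. 0 < fst p \<and> 0 < snd p}" by (auto simp: P21_def)
  from hh_cont_on_swap[OF this, of "\<alpha>2 + \<alpha>3" \<alpha>1] pos CC show ?thesis
    by (intro continuous_intros) auto
qed

lemma cont_g0: "continuous_on {0<..} (\<lambda>y. k0 * (\<theta> * fp lam al y * C1 (\<theta> * Fp lam al y)))"
  using continuous_on_mult[OF continuous_on_const diag_cont_on[of "{0<..}" al]] al by auto

lemma main:
  fixes M :: "'w measure" and Y :: "'w \<Rightarrow> real \<times> real"
  assumes M: "prob_space M"
    and Y_meas: "Y \<in> borel_measurable M"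
    and cdf: "\<And>y1 y2. measure M {\<omega> \<in> space M. fst (Y \<omega>) \<le> y1 \<and> snd (Y \<omega>) \<le> y2}
                 = BGEPS_cdf a \<alpha>1 \<alpha>2 \<alpha>3 lam \<theta> y1 y2"
  shows "\<forall>A \<in> sets (borel :: (real \<times> real) measure). A \<subseteq> {0<..} \<times> {0<..} \<longrightarrow>
           measure M (Y -` A \<inter> space M) =
             (LINT p : A \<inter> {p. fst p < snd p} | lborel. BGEPS_f1 a \<alpha>1 \<alpha>2 \<alpha>3 lam \<theta> (fst p) (snd p))
           + (LINT p : A \<inter> {p. snd p < fst p} | lborel. BGEPS_f2 a \<alpha>1 \<alpha>2 \<alpha>3 lam \<theta> (fst p) (snd p))
           + (LINT y : {y. (y, y) \<in> A} | lborel. BGEPS_f0 a \<alpha>1 \<alpha>2 \<alpha>3 lam \<theta> y)"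
proof -
  interpret P: prob_space M by fact
  have sb: "sets (borel :: (real \<times> real) measure) = sigma_sets UNIV (range atMost)"
    by (subst borel_eq_atMost) (simp add: sets_measure_of)
  have qe: "{..(x1, x2)} = {p::real\<times>real. fst p \<le> x1 \<and> snd p \<le> x2}" for x1 x2
    by (auto simp: less_eq_prod_def)
  have D: "distr M borel Y = NN"
  proof (rule measure_eqI_generator_eq[where \<Omega>=UNIV and E="range atMost" and A="\<lambda>i. {..(real i, real i)}"])
    show "Int_stable (range (atMost :: real \<times> real \<Rightarrow> _))"
    proof (rule Int_stableI, safe)
      fix x y :: "real \<times> real"
      have "{..x} \<inter> {..y} = {..(min (fst x) (fst y), min (snd x) (snd y))}"
        by (auto simp: less_eq_prod_def)
      then show "{..x} \<inter> {..y} \<in> range atMost" by blast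
    qed
    show "range atMost \<subseteq> Pow (UNIV :: (real \<times> real) set)" by simp
    show "sets (distr M borel Y) = sigma_sets UNIV (range atMost)" using sb by simp
    show "sets NN = sigma_sets UNIV (range atMost)" using sb sets_NN by simp
    show "range (\<lambda>i::nat. {..(real i, real i)}) \<subseteq> range atMost" by auto
    show "(\<Union>i::nat. {..(real i, real i)}) = UNIV"
    proof (safe)
      fix x1 x2 :: real
      obtain n :: nat where "max x1 x2 \<le> real n" using real_arch_simple by blast
      then show "(x1, x2) \<in> (\<Union>i::nat. {..(real i, real i)})" by (auto simp: less_eq_prod_def)
    qed simp
    show "emeasure (distr M borel Y) {..(real i, real i)} \<noteq> \<infinity>" for i
      by (simp add: emeasure_distr[OF Y_meas] P.emeasure_eq_measure)
    show "emeasure (distr M borel Y) X = emeasure NN X" if "X \<in> range atMost" for X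
    proof -
      obtain x1 x2 where X: "X = {..(x1, x2)}" using \<open>X \<in> range atMost\<close> by auto
      have Xe: "X = {p. fst p \<le> x1 \<and> snd p \<le> x2}" using X qe by simp
      have pre: "Y -` X \<inter> space M = {\<omega> \<in> space M. fst (Y \<omega>) \<le> x1 \<and> snd (Y \<omega>) \<le> x2}"
        using Xe by auto
      have "emeasure (distr M borel Y) X = emeasure M (Y -` X \<inter> space M)"
        by (rule emeasure_distr[OF Y_meas]) (simp add: Xe Q_borel)
      also have "\<dots> = ennreal (BGEPS_cdf a \<alpha>1 \<alpha>2 \<alpha>3 lam \<theta> x1 x2)"
        using cdf[of x1 x2] by (simp add: pre P.emeasure_eq_measure)
      also have "\<dots> = emeasure NN X" using quad[of x1 x2] Xe by simp
      finally show ?thesis .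
    qed
  qed
  show ?thesis
  proof (intro ballI impI)
    fix A :: "(real \<times> real) set"
    assume A: "A \<in> sets borel" and Apos: "A \<subseteq> {0<..} \<times> {0<..}"
    have fin: "emeasure NN A \<noteq> \<infinity>"
      using D[symmetric] by (simp add: emeasure_distr[OF Y_meas A] P.emeasure_eq_measure)
    have muA: "emeasure NN A = emeasure nu1 A + emeasure nu2 A + emeasure nu0 A"
      using emeasure_NN[OF A] by (simp add: mu_def)
    have f1: "emeasure nu1 A < \<infinity>" "emeasure nu2 A < \<infinity>" "emeasure nu0 A < \<infinity>"
      using fin unfolding muA by (auto simp: less_top)
    have "measure M (Y -` A \<inter> space M) = measure (distr M borel Y) A"
      by (rule measure_distr[OF Y_meas A, symmetric])
    also have "\<dots> = enn2real (emeasure nu1 A) + enn2real (emeasure nu2 A) + enn2real (emeasure nu0 A)"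
      using f1 unfolding D measure_def muA by (simp add: enn2real_plus)
    also have "enn2real (emeasure nu1 A) = (LINT p : A \<inter> {p. fst p < snd p} | lborel. BGEPS_f1 a \<alpha>1 \<alpha>2 \<alpha>3 lam \<theta> (fst p) (snd p))"
    proof -
      let ?h = "\<lambda>p. indicator (A \<inter> {p. fst p < snd p}) p *\<^sub>R BGEPS_f1 a \<alpha>1 \<alpha>2 \<alpha>3 lam \<theta> (fst p) (snd p)"
      let ?r = "\<lambda>p. indicator P12 p *\<^sub>R (hh (\<alpha>1 + \<alpha>3) \<alpha>2 (fst p) (snd p) / CC)"
      have pt: "?h p = indicator A p * ?r p" for p
      proof (cases "p \<in> A")
        case True
        then have p: "0 < fst p" "0 < snd p" using Apos by (auto simp: mem_Times_iff)
        show ?thesis using True p f1_eq[OF p pos] by (auto simp: P12_def CC_def split: split_indicator)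
      qed simp
      have rm: "?r \<in> borel_measurable borel"
        by (rule borel_measurable_continuous_on_indicator[OF P12_borel cont_g1])
      have hm: "?h \<in> borel_measurable lborel"
        unfolding pt using rm A by measurable
      have rnn: "0 \<le> ?r p" for p
        using hh_nn[of "fst p" "snd p" "\<alpha>1 + \<alpha>3" \<alpha>2] pos CC by (auto simp: P12_def split: split_indicator)
      have hnn: "0 \<le> ?h p" for p unfolding pt using rnn[of p] by (auto split: split_indicator)
      have "(LINT p : A \<inter> {p. fst p < snd p} | lborel. BGEPS_f1 a \<alpha>1 \<alpha>2 \<alpha>3 lam \<theta> (fst p) (snd p))
          = enn2real (\<integral>\<^sup>+p. ennreal (?h p) \<partial>lborel)"
        unfolding set_lebesgue_integral_def by (rule integral_eq_nn_integral[OF hm]) (use hnn in simp)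
      also have "(\<integral>\<^sup>+p. ennreal (?h p) \<partial>lborel) = (\<integral>\<^sup>+p. g1 p * indicator A p \<partial>lborel)"
      proof (rule nn_integral_cong)
        fix p show "ennreal (?h p) = g1 p * indicator A p"
          unfolding pt by (simp add: g1_def split: split_indicator)
      qed
      also have "\<dots> = emeasure nu1 A"
        unfolding nu1_def by (rule emeasure_density[symmetric]) (use g1_meas A in auto)
      finally show ?thesis ..
    qed
    also have "enn2real (emeasure nu2 A) = (LINT p : A \<inter> {p. snd p < fst p} | lborel. BGEPS_f2 a \<alpha>1 \<alpha>2 \<alpha>3 lam \<theta> (fst p) (snd p))"
    proof -
      let ?h = "\<lambda>p. indicator (A \<inter> {p. snd p < fst p}) p *\<^sub>R BGEPS_f2 a \<alpha>1 \<alpha>2 \<alpha>3 lam \<theta> (fst p) (snd p)"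
      let ?r = "\<lambda>p. indicator P21 p *\<^sub>R (hh (\<alpha>2 + \<alpha>3) \<alpha>1 (snd p) (fst p) / CC)"
      have pt: "?h p = indicator A p * ?r p" for p
      proof (cases "p \<in> A")
        case True
        then have p: "0 < fst p" "0 < snd p" using Apos by (auto simp: mem_Times_iff)
        show ?thesis using True p f2_eq[OF p pos] by (auto simp: P21_def CC_def split: split_indicator)
      qed simp
      have rm: "?r \<in> borel_measurable borel"
        by (rule borel_measurable_continuous_on_indicator[OF P21_borel cont_g2])
      have hm: "?h \<in> borel_measurable lborel"
        unfolding pt using rm A by measurable
      have rnn: "0 \<le> ?r p" for p
        using hh_nn[of "snd p" "fst p" "\<alpha>2 + \<alpha>3" \<alpha>1] pos CC by (auto simp: P21_def split: split_indicator)
      have hnn: "0 \<le> ?h p" for p unfolding pt using rnn[of p] by (auto split: split_indicator)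
      have "(LINT p : A \<inter> {p. snd p < fst p} | lborel. BGEPS_f2 a \<alpha>1 \<alpha>2 \<alpha>3 lam \<theta> (fst p) (snd p))
          = enn2real (\<integral>\<^sup>+p. ennreal (?h p) \<partial>lborel)"
        unfolding set_lebesgue_integral_def by (rule integral_eq_nn_integral[OF hm]) (use hnn in simp)
      also have "(\<integral>\<^sup>+p. ennreal (?h p) \<partial>lborel) = (\<integral>\<^sup>+p. g2 p * indicator A p \<partial>lborel)"
      proof (rule nn_integral_cong)
        fix p show "ennreal (?h p) = g2 p * indicator A p"
          unfolding pt by (simp add: g2_def split: split_indicator)
      qed
      also have "\<dots> = emeasure nu2 A"
        unfolding nu2_def by (rule emeasure_density[symmetric]) (use g2_meas A in auto)
      finally show ?thesis ..
    qed
    also have "enn2real (emeasure nu0 A) = (LINT y : {y. (y, y) \<in> A} | lborel. BGEPS_f0 a \<alpha>1 \<alpha>2 \<alpha>3 lam \<theta> y)"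
    proof -
      let ?D = "{y::real. (y, y) \<in> A}"
      let ?h = "\<lambda>y. indicator ?D y *\<^sub>R BGEPS_f0 a \<alpha>1 \<alpha>2 \<alpha>3 lam \<theta> y"
      let ?r = "\<lambda>y. indicator {0<..} y *\<^sub>R (k0 * (\<theta> * fp lam al y * C1 (\<theta> * Fp lam al y)))"
      have dmb: "(\<lambda>y::real. (y, y)) \<in> borel_measurable borel"
        by (intro borel_measurable_continuous_onI continuous_intros)
      have Db: "?D \<in> sets borel"
        using measurable_sets[OF dmb A] by (simp add: vimage_def)
      have pt: "?h y = indicator ?D y * ?r y" for y
      proof (cases "y \<in> ?D")
        case True
        then have y: "0 < y" using Apos by (auto simp: mem_Times_iff)
        show ?thesis using True y f0_eq[OF y pos]
          by (auto simp: CC_def al_def k0_def split: split_indicator)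
      qed simp
      have rm: "?r \<in> borel_measurable borel"
        by (rule borel_measurable_continuous_on_indicator[OF _ cont_g0]) simp
      have hm: "?h \<in> borel_measurable lborel"
        unfolding pt using rm Db by measurable
      have rnn: "0 \<le> ?r y" for y
      proof (cases "y > 0")
        case True
        then show ?thesis
          using arg1[OF True al] C1_nn[of "\<theta> * Fp lam al y"] fp_nn[OF lam True al] th k0
          by (auto split: split_indicator)
      qed (simp split: split_indicator)
      have hnn: "0 \<le> ?h y" for y unfolding pt using rnn[of y] by (auto split: split_indicator)
      have dm: "(\<lambda>y::real. (y, y)) \<in> measurable (density lborel g0) borel"
        by (simp add: measurable_cong_sets[OF sets_density refl] dmb)
      have "(LINT y : ?D | lborel. BGEPS_f0 a \<alpha>1 \<alpha>2 \<alpha>3 lam \<theta> y)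
          = enn2real (\<integral>\<^sup>+y. ennreal (?h y) \<partial>lborel)"
        unfolding set_lebesgue_integral_def by (rule integral_eq_nn_integral[OF hm]) (use hnn in simp)
      also have "(\<integral>\<^sup>+y. ennreal (?h y) \<partial>lborel) = (\<integral>\<^sup>+y. g0 y * indicator ?D y \<partial>lborel)"
      proof (rule nn_integral_cong)
        fix y show "ennreal (?h y) = g0 y * indicator ?D y"
          unfolding pt by (simp add: g0_def split: split_indicator)
      qed
      also have "\<dots> = emeasure (density lborel g0) ?D"
        by (rule emeasure_density[symmetric]) (use g0_meas Db in auto)
      also have "\<dots> = emeasure nu0 A"
        unfolding nu0_def by (simp add: emeasure_distr[OF dm A] vimage_def)
      finally show ?thesis ..
    qed
    finally show "measure M (Y -` A \<inter> space M) =
             (LINT p : A \<inter> {p. fst p < snd p} | lborel. BGEPS_f1 a \<alpha>1 \<alpha>2 \<alpha>3 lam \<theta> (fst p) (snd p))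
           + (LINT p : A \<inter> {p. snd p < fst p} | lborel. BGEPS_f2 a \<alpha>1 \<alpha>2 \<alpha>3 lam \<theta> (fst p) (snd p))
           + (LINT y : {y. (y, y) \<in> A} | lborel. BGEPS_f0 a \<alpha>1 \<alpha>2 \<alpha>3 lam \<theta> y)" .
  qed
qed

end


theorem theorem1:
  fixes a :: "nat \<Rightarrow> real" and s \<theta> \<alpha>1 \<alpha>2 \<alpha>3 lam :: real
    and M :: "'w measure" and Y :: "'w \<Rightarrow> real \<times> real"
  assumes a_nonneg: "\<And>n. n \<ge> 1 \<Longrightarrow> a n \<ge> 0"
    and C_finite: "\<And>t. t \<in> {0<..<s} \<Longrightarrow> summable (\<lambda>n. a (Suc n) * t ^ Suc n)"
    and theta: "\<theta> \<in> {0<..<s}" and C_pos: "PS_C a \<theta> > 0"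
    and pos: "\<alpha>1 > 0" "\<alpha>2 > 0" "\<alpha>3 > 0" "lam > 0"
    and M: "prob_space M"
    and Y_meas: "Y \<in> borel_measurable M"
    and cdf: "\<And>y1 y2. measure M {\<omega> \<in> space M. fst (Y \<omega>) \<le> y1 \<and> snd (Y \<omega>) \<le> y2}
                 = BGEPS_cdf a \<alpha>1 \<alpha>2 \<alpha>3 lam \<theta> y1 y2"
  shows "\<forall>A \<in> sets (borel :: (real \<times> real) measure). A \<subseteq> {0<..} \<times> {0<..} \<longrightarrow>
           measure M (Y -` A \<inter> space M) =
             (LINT p : A \<inter> {p. fst p < snd p} | lborel. BGEPS_f1 a \<alpha>1 \<alpha>2 \<alpha>3 lam \<theta> (fst p) (snd p))
           + (LINT p : A \<inter> {p. snd p < fst p} | lborel. BGEPS_f2 a \<alpha>1 \<alpha>2 \<alpha>3 lam \<theta> (fst p) (snd p))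
           + (LINT y : {y. (y, y) \<in> A} | lborel. BGEPS_f0 a \<alpha>1 \<alpha>2 \<alpha>3 lam \<theta> y)"
proof -
  interpret bge3 a \<theta> lam \<alpha>1 \<alpha>2 \<alpha>3
  proof (unfold_locales)
    show "\<And>n. 1 \<le> n \<Longrightarrow> 0 \<le> a n" by (rule a_nonneg)
    show "0 < \<theta>" using theta by simp
    show "summable (\<lambda>n. a (Suc n) * \<theta> ^ Suc n)" by (rule C_finite[OF theta])
    show "0 < lam" by (rule pos(4))
    show "0 < \<alpha>1" "0 < \<alpha>2" "0 < \<alpha>3" by (rule pos)+
    show "0 < PS_C a \<theta>" by (rule C_pos)
  qed
  show ?thesis by (rule main[OF M Y_meas cdf])
qed

end
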